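(* Let $f$ be a multiplicative function from the positive integers to the nonnegative integers with $f(p^{k-1})\le f(p^k)$ for all primes $p$ and integers $k\ge1$. Then $f$ is convenient if and only if the following holds: for every prime $p$ and every $f$-practical positive integer $m$ with $\gcd(m,p)=1$, the inequality $f(p)\le S_f(m)+1$ implies $f(p^{k+1})\le S_f(mp^k)+1$ for every integer $k\ge0$.
   Context: $f$ multiplicative means $f(1)=1$ and $f(ab)=f(a)f(b)$ for coprime $a,b$. $S_f(n)=\sum_{d\mid n} f(d)$. A positive integer $n$ is $f$-practical if every positive integer $m\le S_f(n)$ equals $\sum_{d\in\mathcal{D}}f(d)$ for some set $\mathcal{D}$ of distinct divisors of $n$. Write $n=p_1^{e_1}\cdots p_k^{e_k}$ with distinct primes ordered so that $f(p_1)\le\cdots\le f(p_k)$, and let $m_i=\prod_{j=1}^{i}p_j^{e_j}$ for $0\le i<k$ ($m_0=1$); $n$ is weakly $f$-practical if $f(p_{i+1})\le S_f(m_i)+1$ for every $0\le i<k$. The function $f$ is called convenient if every weakly $f$-practical number is $f$-practical. *)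

theory Defs
  imports "HOL-Computational_Algebra.Primes"
begin

text \<open>f is a function on the positive integers (value at 0 is irrelevant).\<close>

definition multiplicative :: "(nat \<Rightarrow> nat) \<Rightarrow> bool" where
  "multiplicative f \<longleftrightarrow> f 1 = 1 \<and>
     (\<forall>a b. a > 0 \<longrightarrow> b > 0 \<longrightarrow> coprime a b \<longrightarrow> f (a * b) = f a * f b)"

definition S_f :: "(nat \<Rightarrow> nat) \<Rightarrow> nat \<Rightarrow> nat" where
  "S_f f n = (\<Sum>d\<in>{d. d dvd n}. f d)"

definition f_practical :: "(nat \<Rightarrow> nat) \<Rightarrow> nat \<Rightarrow> bool" where
  "f_practical f n \<longleftrightarrow> n > 0 \<and>
     (\<forall>m. 1 \<le> m \<and> m \<le> S_f f n \<longrightarrow> (\<exists>D. D \<subseteq> {d. d dvd n} \<and> m = (\<Sum>d\<in>D. f d)))"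

definition weakly_f_practical :: "(nat \<Rightarrow> nat) \<Rightarrow> nat \<Rightarrow> bool" where
  "weakly_f_practical f n \<longleftrightarrow> n > 0 \<and>
     (\<forall>ps. distinct ps \<and> set ps = prime_factors n \<and> sorted_wrt (\<lambda>p q. f p \<le> f q) ps \<longrightarrow>
        (\<forall>i < length ps. f (ps ! i) \<le> S_f f (\<Prod>j<i. (ps ! j) ^ multiplicity (ps ! j) n) + 1))"

definition convenient :: "(nat \<Rightarrow> nat) \<Rightarrow> bool" where
  "convenient f \<longleftrightarrow> (\<forall>n. weakly_f_practical f n \<longrightarrow> f_practical f n)"

end

theory Submission
  imports Defs
begin

lemma fmul:
  assumes "multiplicative f" "a > 0" "b > 0" "coprime a b"
  shows "f (a * b) = f a * f b"
  using assms unfolding multiplicative_def by blast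

lemma fpp:
  assumes "multiplicative f"
    and mono: "\<And>p k. prime p \<Longrightarrow> k \<ge> 1 \<Longrightarrow> f (p ^ (k - 1)) \<le> f (p ^ k)"
    and "prime p"
  shows "f (p ^ k) \<ge> 1 \<and> (k \<ge> 1 \<longrightarrow> f (p ^ k) \<ge> f p)"
proof (induction k)
  case 0
  then show ?case using assms(1) by (simp add: multiplicative_def)
next
  case (Suc k)
  have "f (p ^ k) \<le> f (p ^ Suc k)" using mono[OF assms(3), of "Suc k"] by simp
  then show ?case using Suc by (cases "k = 0") auto
qed

lemma decomp:
  fixes d r :: nat
  assumes "prime r" "d > 0"
  obtains y where "d = r ^ multiplicity r d * y" "\<not> r dvd y" "y > 0"
    "coprime (r ^ multiplicity r d) y"
proof -
  obtain y where y: "d = r ^ multiplicity r d * y" "\<not> r dvd y"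
    using multiplicity_decompose'[of d r] assms by (metis not_prime_unit not_gr0)
  then have "y > 0" using assms by (metis gr0I mult_0_right)
  moreover have "coprime (r ^ multiplicity r d) y"
    using y(2) assms(1) by (metis coprime_commute prime_imp_power_coprime)
  ultimately show ?thesis using y that by blast
qed

lemma fpos:
  assumes "multiplicative f"
    and mono: "\<And>p k. prime p \<Longrightarrow> k \<ge> 1 \<Longrightarrow> f (p ^ (k - 1)) \<le> f (p ^ k)"
  shows "n > 0 \<Longrightarrow> f n \<ge> 1"
proof (induction n rule: less_induct)
  case (less n)
  show ?case
  proof (cases "n = 1")
    case True
    then show ?thesis using assms(1) by (simp add: multiplicative_def)
  next
    case False
    then obtain r where r: "prime r" "r dvd n" using prime_factor_nat by blast
    obtain y where y: "n = r ^ multiplicity r n * y" "\<not> r dvd y" "y > 0"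
      "coprime (r ^ multiplicity r n) y" using decomp[OF r(1) less.prems] by blast
    have v: "multiplicity r n > 0" using r less.prems
      by (simp add: prime_multiplicity_gt_zero_iff)
    have "r ^ multiplicity r n > 1" using v prime_gt_1_nat[OF r(1)] one_less_power by blast
    then have "y < n" using y(1,3) by (metis mult_less_cancel2 nat_mult_1 )
    then have "f y \<ge> 1" using less y by blast
    moreover have "f (r ^ multiplicity r n) \<ge> 1" using fpp[OF assms r(1)] by blast
    moreover have "f n = f (r ^ multiplicity r n) * f y"
      using fmul[OF assms(1), of "r ^ multiplicity r n" y] y prime_gt_0_nat[OF r(1)] by simp
    ultimately show ?thesis by (metis le_trans mult_le_mono nat_mult_1)
  qed
qed

lemma fprime_le:
  assumes "multiplicative f"
    and mono: "\<And>p k. prime p \<Longrightarrow> k \<ge> 1 \<Longrightarrow> f (p ^ (k - 1)) \<le> f (p ^ k)"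
    and r: "prime r" "r dvd n" and n: "n > 0"
  shows "f r \<le> f n"
proof -
  obtain y where y: "n = r ^ multiplicity r n * y" "\<not> r dvd y" "y > 0"
      "coprime (r ^ multiplicity r n) y" using decomp[OF r(1) n] by blast
  have v: "multiplicity r n \<ge> 1" using r n
    by (simp add: prime_multiplicity_gt_zero_iff Suc_le_eq)
  have "f y \<ge> 1" using fpos[OF assms(1,2) y(3)] .
  moreover have "f (r ^ multiplicity r n) \<ge> f r" using fpp[OF assms(1,2) r(1)] v by blast
  moreover have "f n = f (r ^ multiplicity r n) * f y"
    using fmul[OF assms(1), of "r ^ multiplicity r n" y] y prime_gt_0_nat[OF r(1)] by simp
  ultimately show ?thesis by (metis le_trans mult_le_mono nat_mult_1_right order_refl)
qed

lemma S_mono: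
  fixes a b :: nat
  assumes "a dvd b" "b > 0"
  shows "S_f f a \<le> S_f f b"
  unfolding S_f_def
  by (rule sum_mono2) (use assms finite_divisors_nat dvd_trans in auto)

lemma rep:
  assumes "f_practical f n" "t \<le> S_f f n"
  shows "\<exists>D. D \<subseteq> {d. d dvd n} \<and> t = (\<Sum>d\<in>D. f d)"
proof (cases "t = 0")
  case True
  then show ?thesis by (intro exI[of _ "{}"]) auto
next
  case False
  then show ?thesis using assms unfolding f_practical_def by auto
qed

lemma div_split:
  fixes m p :: nat
  assumes "m > 0" "prime p" "coprime m p"
  shows "{d. d dvd m * p ^ Suc k} = {d. d dvd m * p ^ k} \<union> (\<lambda>d. d * p ^ Suc k) ` {d. d dvd m}"
    and "{d. d dvd m * p ^ k} \<inter> (\<lambda>d. d * p ^ Suc k) ` {d. d dvd m} = {}"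
proof -
  show "{d. d dvd m * p ^ Suc k} = {d. d dvd m * p ^ k} \<union> (\<lambda>d. d * p ^ Suc k) ` {d. d dvd m}"
  proof (intro equalityI subsetI)
    fix d assume "d \<in> {d. d dvd m * p ^ Suc k}"
    then have "d dvd m * p ^ Suc k" by simp
    then obtain b c where bc: "d = b * c" "b dvd m" "c dvd p ^ Suc k"
      using division_decomp by blast
    then obtain i where i: "i \<le> Suc k" "c = p ^ i" using divides_primepow_nat[OF assms(2)] by blast
    show "d \<in> {d. d dvd m * p ^ k} \<union> (\<lambda>d. d * p ^ Suc k) ` {d. d dvd m}"
    proof (cases "i \<le> k")
      case True
      then have "d dvd m * p ^ k" using bc i by (simp add: le_imp_power_dvd mult_dvd_mono)
      then show ?thesis by simp
    next
      case False
      then have "i = Suc k" using i by simp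
      then show ?thesis using bc i by auto
    qed
  next
    fix d assume "d \<in> {d. d dvd m * p ^ k} \<union> (\<lambda>d. d * p ^ Suc k) ` {d. d dvd m}"
    then show "d \<in> {d. d dvd m * p ^ Suc k}"
      by (auto intro: dvd_trans[of _ "m * p ^ k"] simp: mult_dvd_mono)
  qed
  show "{d. d dvd m * p ^ k} \<inter> (\<lambda>d. d * p ^ Suc k) ` {d. d dvd m} = {}"
  proof (rule ccontr)
    assume "\<not> ?thesis"
    then obtain b where b: "b dvd m" "b * p ^ Suc k dvd m * p ^ k" by blast
    then have "p ^ k * (b * p) dvd p ^ k * m" by (simp add: mult.commute mult.left_commute)
    then have "b * p dvd m" using prime_gt_0_nat[OF assms(2)] nat_mult_dvd_cancel1[of "p ^ k" "b * p" m] by simp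
    then have "p dvd m" by (metis dvd_mult_right)
    then have "p dvd gcd m p" by simp
    then show False using assms by simp
  qed
qed

lemma S_step:
  fixes m p :: nat
  assumes "multiplicative f" "m > 0" "prime p" "coprime m p"
  shows "S_f f (m * p ^ Suc k) = S_f f (m * p ^ k) + f (p ^ Suc k) * S_f f m"
proof -
  have p0: "p > 0" using prime_gt_0_nat[OF assms(3)] .
  have fin1: "finite {d. d dvd m * p ^ k}" using finite_divisors_nat assms p0 by simp
  have fin2: "finite {d. d dvd m}" using finite_divisors_nat assms by simp
  have inj: "inj_on (\<lambda>d. d * p ^ Suc k) {d. d dvd m}" using p0 by (auto simp: inj_on_def)
  have "S_f f (m * p ^ Suc k) = S_f f (m * p ^ k) + (\<Sum>d\<in>(\<lambda>d. d * p ^ Suc k) ` {d. d dvd m}. f d)"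
    unfolding S_f_def div_split(1)[OF assms(2-4)]
    by (rule sum.union_disjoint) (use fin1 fin2 div_split(2)[OF assms(2-4)] in auto)
  also have "(\<Sum>d\<in>(\<lambda>d. d * p ^ Suc k) ` {d. d dvd m}. f d) = (\<Sum>d\<in>{d. d dvd m}. f (d * p ^ Suc k))"
    using sum.reindex[OF inj] by simp
  also have "\<dots> = (\<Sum>d\<in>{d. d dvd m}. f d * f (p ^ Suc k))"
  proof (rule sum.cong)
    fix d assume "d \<in> {d. d dvd m}"
    then have d: "d dvd m" by simp
    then have "d > 0" using assms(2) by (metis dvd_0_left_iff gr0I not_gr0)
    moreover have "coprime d (p ^ Suc k)"
      using coprime_divisors[OF d dvd_refl] assms(4) by (simp add: coprime_power_right_iff)
    ultimately show "f (d * p ^ Suc k) = f d * f (p ^ Suc k)"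
      using fmul[OF assms(1)] p0 by simp
  qed simp
  also have "\<dots> = f (p ^ Suc k) * S_f f m" unfolding S_f_def by (simp add: sum_distrib_left mult.commute)
  finally show ?thesis .
qed

lemma L1:
  fixes m p :: nat
  assumes fm: "multiplicative f"
    and mono: "\<And>p k. prime p \<Longrightarrow> k \<ge> 1 \<Longrightarrow> f (p ^ (k - 1)) \<le> f (p ^ k)"
    and pm: "f_practical f m" and pN: "f_practical f (m * p ^ k)"
    and p: "prime p" and cop: "coprime m p"
    and le: "f (p ^ Suc k) \<le> S_f f (m * p ^ k) + 1"
  shows "f_practical f (m * p ^ Suc k)"
proof -
  have m0: "m > 0" using pm unfolding f_practical_def by simp
  have p0: "p > 0" using prime_gt_0_nat[OF p] .
  define a where "a = f (p ^ Suc k)"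
  define B where "B = S_f f (m * p ^ k)"
  define M where "M = S_f f m"
  have Sst: "S_f f (m * p ^ Suc k) = B + a * M" using S_step[OF fm m0 p cop] a_def B_def M_def by simp
  have a1: "a \<ge> 1" using fpp[OF fm mono p] a_def by blast
  show ?thesis unfolding f_practical_def
  proof (intro conjI allI impI)
    show "m * p ^ Suc k > 0" using m0 p0 by simp
    fix t assume t: "1 \<le> t \<and> t \<le> S_f f (m * p ^ Suc k)"
    obtain x y where xy: "t = a * x + y" "x \<le> M" "y \<le> B"
    proof (cases "t div a \<le> M")
      case True
      have "t mod a < a" using a1 by simp
      then have "t mod a \<le> B" using le a_def B_def by simp
      then show ?thesis using that[of "t div a" "t mod a"] True by simp
    next
      case False
      then have "a * M \<le> a * (t div a)" by simp
      also have "\<dots> \<le> t" by simp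
      finally have "a * M \<le> t" .
      moreover have "t - a * M \<le> B" using t Sst by linarith
      ultimately show ?thesis using that[of M "t - a * M"] by simp
    qed
    obtain D1 where D1: "D1 \<subseteq> {d. d dvd m}" "x = (\<Sum>d\<in>D1. f d)"
      using rep[OF pm, of x] xy M_def by blast
    obtain E where E: "E \<subseteq> {d. d dvd m * p ^ k}" "y = (\<Sum>d\<in>E. f d)"
      using rep[OF pN, of y] xy B_def by blast
    have fin2: "finite {d. d dvd m}" using finite_divisors_nat m0 by simp
    have fin1: "finite {d. d dvd m * p ^ k}" using finite_divisors_nat m0 p0 by simp
    have inj: "inj_on (\<lambda>d. d * p ^ Suc k) D1" using p0 by (auto simp: inj_on_def)
    let ?D = "E \<union> (\<lambda>d. d * p ^ Suc k) ` D1"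
    have "?D \<subseteq> {d. d dvd m * p ^ Suc k}"
      using div_split(1)[OF m0 p cop, of k] D1 E by blast
    moreover have "(\<Sum>d\<in>?D. f d) = t"
    proof -
      have "(\<Sum>d\<in>?D. f d) = (\<Sum>d\<in>E. f d) + (\<Sum>d\<in>(\<lambda>d. d * p ^ Suc k) ` D1. f d)"
      proof (rule sum.union_disjoint)
        show "finite E" using fin1 E finite_subset by blast
        show "finite ((\<lambda>d. d * p ^ Suc k) ` D1)" using fin2 D1 finite_subset by blast
        show "E \<inter> (\<lambda>d. d * p ^ Suc k) ` D1 = {}" using div_split(2)[OF m0 p cop, of k] D1 E by blast
      qed
      also have "(\<Sum>d\<in>(\<lambda>d. d * p ^ Suc k) ` D1. f d) = (\<Sum>d\<in>D1. f (d * p ^ Suc k))"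
        using sum.reindex[OF inj] by simp
      also have "\<dots> = (\<Sum>d\<in>D1. f d * a)"
      proof (rule sum.cong)
        fix d assume "d \<in> D1"
        then have d: "d dvd m" using D1 by auto
        then have "d > 0" using m0 by (metis dvd_0_left_iff gr0I)
        moreover have "coprime d (p ^ Suc k)"
          using coprime_divisors[OF d dvd_refl] cop by (simp add: coprime_power_right_iff)
        ultimately show "f (d * p ^ Suc k) = f d * a"
          using fmul[OF fm] p0 a_def by simp
      qed simp
      also have "\<dots> = a * x" using D1 by (simp add: sum_distrib_left mult.commute)
      finally show ?thesis using E xy by simp
    qed
    ultimately show "\<exists>D. D \<subseteq> {d. d dvd m * p ^ Suc k} \<and> t = (\<Sum>d\<in>D. f d)" by metis
  qed
qed

lemma L2:
  fixes m p :: nat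
  assumes fm: "multiplicative f"
    and mono: "\<And>p k. prime p \<Longrightarrow> k \<ge> 1 \<Longrightarrow> f (p ^ (k - 1)) \<le> f (p ^ k)"
    and pr: "f_practical f (m * p ^ Suc k)" and m0: "m > 0"
    and p: "prime p" and cop: "coprime m p"
  shows "f (p ^ Suc k) \<le> S_f f (m * p ^ k) + 1"
proof (rule ccontr)
  assume neg: "\<not> ?thesis"
  have p0: "p > 0" using prime_gt_0_nat[OF p] .
  define a where "a = f (p ^ Suc k)"
  define B where "B = S_f f (m * p ^ k)"
  define M where "M = S_f f m"
  have Sst: "S_f f (m * p ^ Suc k) = B + a * M" using S_step[OF fm m0 p cop] a_def B_def M_def by simp
  have fin2: "finite {d. d dvd m}" using finite_divisors_nat m0 by simp
  have fin1: "finite {d. d dvd m * p ^ k}" using finite_divisors_nat m0 p0 by simp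
  have "M \<ge> f 1" unfolding M_def S_f_def by (rule member_le_sum) (use fin2 in auto)
  then have M1: "M \<ge> 1" using fm by (simp add: multiplicative_def)
  have "a * M \<ge> a" using M1 by simp
  then have "B + 1 \<le> S_f f (m * p ^ Suc k)" using Sst neg a_def B_def by linarith
  then obtain D where D: "D \<subseteq> {d. d dvd m * p ^ Suc k}" "B + 1 = (\<Sum>d\<in>D. f d)"
    using pr unfolding f_practical_def by auto
  have "finite {d. d dvd m * p ^ Suc k}" using finite_divisors_nat[of "m * p ^ Suc k"] m0 p0 by simp
  then have finD: "finite D" using D(1) finite_subset by blast
  have "D \<subseteq> {d. d dvd m * p ^ k}"
  proof
    fix d assume dD: "d \<in> D"
    show "d \<in> {d. d dvd m * p ^ k}"
    proof (rule ccontr)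
      assume "d \<notin> {d. d dvd m * p ^ k}"
      then obtain e where e: "e dvd m" "d = e * p ^ Suc k"
        using D(1) dD div_split(1)[OF m0 p cop, of k] by blast
      have "e > 0" using e m0 by (metis dvd_0_left_iff gr0I)
      moreover have "coprime e (p ^ Suc k)"
        using coprime_divisors[OF e(1) dvd_refl] cop by (simp add: coprime_power_right_iff)
      ultimately have "f d = f e * a" using fmul[OF fm] e p0 a_def by simp
      moreover have "f e \<ge> 1" using fpos[OF fm mono \<open>e > 0\<close>] .
      ultimately have "f d \<ge> a" by simp
      moreover have "f d \<le> B + 1" using D(2) member_le_sum[OF dD, of f] finD by simp
      ultimately show False using neg a_def B_def by simp
    qed
  qed
  then have "(\<Sum>d\<in>D. f d) \<le> B" unfolding B_def S_f_def by (rule sum_mono2[OF fin1]) simp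
  then show False using D(2) by simp
qed

lemma L1iter:
  fixes m p :: nat
  assumes fm: "multiplicative f"
    and mono: "\<And>p k. prime p \<Longrightarrow> k \<ge> 1 \<Longrightarrow> f (p ^ (k - 1)) \<le> f (p ^ k)"
    and pm: "f_practical f m" and p: "prime p" and cop: "coprime m p"
    and H: "\<forall>k. f (p ^ (k + 1)) \<le> S_f f (m * p ^ k) + 1"
  shows "f_practical f (m * p ^ K)"
proof (induction K)
  case 0
  then show ?case using pm by simp
next
  case (Suc K)
  show ?case using L1[OF fm mono pm Suc p cop] H by simp
qed

definition Lp :: "(nat \<Rightarrow> nat) \<Rightarrow> nat \<Rightarrow> nat \<Rightarrow> nat" where
  "Lp f c x = (\<Prod>r\<in>{r\<in>prime_factors x. f r < c}. r ^ multiplicity r x)"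

lemma Lp_pos: "Lp f c x > 0"
  unfolding Lp_def by (rule prod_pos) (auto intro: prime_gt_0_nat)

lemma Lp_dvd_self:
  assumes "x > 0"
  shows "Lp f c x dvd x"
proof -
  have "Lp f c x dvd (\<Prod>r\<in>prime_factors x. r ^ multiplicity r x)"
    unfolding Lp_def by (rule prod_dvd_prod_subset) auto
  also have "\<dots> = x" using prod_prime_factors[of x] assms by simp
  finally show ?thesis .
qed

lemma prime_dvd_Lp:
  assumes "prime r" "r dvd Lp f c x"
  shows "r \<in> prime_factors x \<and> f r < c"
proof -
  obtain s where s: "s \<in> {r\<in>prime_factors x. f r < c}" "r dvd s ^ multiplicity s x"
    using assms prime_dvd_prod_iff[of "{r\<in>prime_factors x. f r < c}" r] unfolding Lp_def by auto
  have "r dvd s" using prime_dvd_power[OF assms(1) s(2)] .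
  then have "r = s" using primes_dvd_imp_eq assms(1) s(1) by auto
  then show ?thesis using s by simp
qed

lemma dvd_Lp:
  fixes d x :: nat
  assumes "d dvd x" "x > 0" "\<And>r. prime r \<Longrightarrow> r dvd d \<Longrightarrow> f r < c"
  shows "d dvd Lp f c x"
proof (rule multiplicity_le_imp_dvd)
  show "d \<noteq> 0" using assms by auto
  fix s :: nat assume s: "prime s"
  have mL: "multiplicity s (Lp f c x) = (if s \<in> {r\<in>prime_factors x. f r < c} then multiplicity s x else 0)"
    unfolding Lp_def by (rule multiplicity_prod_prime_powers) (auto simp: s)
  show "multiplicity s d \<le> multiplicity s (Lp f c x)"
  proof (cases "s dvd d")
    case True
    then have "s \<in> {r\<in>prime_factors x. f r < c}"
      using assms s dvd_trans[OF True assms(1)] by (auto simp: prime_factors_dvd)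
    moreover have "multiplicity s d \<le> multiplicity s x"
      using assms by (intro dvd_imp_multiplicity_le) auto
    ultimately show ?thesis using mL by simp
  next
    case False
    then show ?thesis by (simp add: not_dvd_imp_multiplicity_0)
  qed
qed

lemma Lp_mono:
  fixes x y :: nat
  assumes "x dvd y" "y > 0" "x > 0"
  shows "Lp f c x dvd Lp f c y"
proof (rule dvd_Lp)
  show "Lp f c x dvd y" using assms Lp_dvd_self[OF assms(3)] dvd_trans by blast
  show "y > 0" by fact
  fix r :: nat assume "prime r" "r dvd Lp f c x"
  then show "f r < c" using prime_dvd_Lp by blast
qed

lemma LA:
  fixes m :: nat
  assumes fm: "multiplicative f"
    and mono: "\<And>p k. prime p \<Longrightarrow> k \<ge> 1 \<Longrightarrow> f (p ^ (k - 1)) \<le> f (p ^ k)"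
    and pm: "f_practical f m" and c: "c \<le> S_f f m + 1"
  shows "c \<le> S_f f (Lp f c m) + 1"
proof (cases "c \<le> 1")
  case True
  then show ?thesis by simp
next
  case False
  have m0: "m > 0" using pm unfolding f_practical_def by simp
  have "c - 1 \<le> S_f f m" using c by simp
  then obtain D where D: "D \<subseteq> {d. d dvd m}" "c - 1 = (\<Sum>d\<in>D. f d)"
    using rep[OF pm, of "c - 1"] by blast
  have fin: "finite {d. d dvd m}" using finite_divisors_nat m0 by simp
  then have finD: "finite D" using D(1) finite_subset by blast
  have "D \<subseteq> {d. d dvd Lp f c m}"
  proof
    fix d assume dD: "d \<in> D"
    then have dm: "d dvd m" using D by auto
    then have d0: "d > 0" using m0 by (metis dvd_0_left_iff gr0I)
    have fd: "f d \<le> c - 1" using D(2) member_le_sum[OF dD, of f] finD by simp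
    have "d dvd Lp f c m"
    proof (rule dvd_Lp[OF dm m0])
      fix r :: nat assume "prime r" "r dvd d"
      then have "f r \<le> f d" using fprime_le[OF fm mono _ _ d0] by blast
      then show "f r < c" using fd False by simp
    qed
    then show "d \<in> {d. d dvd Lp f c m}" by simp
  qed
  then have "(\<Sum>d\<in>D. f d) \<le> S_f f (Lp f c m)" unfolding S_f_def
    by (rule sum_mono2[OF finite_divisors_nat[OF Lp_pos]]) simp
  then show ?thesis using D(2) by simp
qed


lemma prod_take:
  assumes "distinct xs" "i \<le> length xs"
  shows "(\<Prod>j<i. g (xs ! j)) = prod g (set (take i xs))"
proof -
  have "(\<Prod>j<i. g (xs ! j)) = (\<Prod>j<length (take i xs). g (take i xs ! j))"
    using assms(2) by (intro prod.cong) auto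
  also have "\<dots> = prod g (set (take i xs))"
    by (rule prod.reindex_bij_betw, rule bij_betw_nth) (use assms in auto)
  finally show ?thesis .
qed


lemma weak_from:
  fixes n :: nat
  assumes n0: "n > 0" and H: "\<forall>q\<in>prime_factors n. f q \<le> S_f f (Lp f (f q) n) + 1"
  shows "weakly_f_practical f n"
  unfolding weakly_f_practical_def
proof (intro conjI allI impI n0)
  fix ps :: "nat list" and i
  assume ps: "distinct ps \<and> set ps = prime_factors n \<and> sorted_wrt (\<lambda>p q. f p \<le> f q) ps"
    and i: "i < length ps"
  have ps1: "distinct ps" and ps2: "set ps = prime_factors n"
    and ps3: "sorted_wrt (\<lambda>p q. f p \<le> f q) ps" using ps by auto
  define q where "q = ps ! i"
  have "q \<in> set ps" using i q_def by simp
  then have q: "q \<in> prime_factors n" using ps2 by blast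
  have Mi: "(\<Prod>j<i. (ps ! j) ^ multiplicity (ps ! j) n) = (\<Prod>r\<in>set (take i ps). r ^ multiplicity r n)"
    using prod_take[of ps i "\<lambda>r. r ^ multiplicity r n"] ps1 i by simp
  have sub: "{r\<in>prime_factors n. f r < f q} \<subseteq> set (take i ps)"
  proof
    fix r assume r: "r \<in> {r\<in>prime_factors n. f r < f q}"
    then have "r \<in> set ps" using ps2 by blast
    then obtain j where j: "j < length ps" "r = ps ! j" by (auto simp: in_set_conv_nth)
    have "j < i"
    proof (rule ccontr)
      assume "\<not> j < i"
      then have "j = i \<or> i < j" by auto
      then have "f q \<le> f r"
      proof
        assume "j = i" then show ?thesis using j q_def by simp
      next
        assume "i < j"
        then have "f (ps ! i) \<le> f (ps ! j)" using sorted_wrt_nth_less[of "\<lambda>p q. f p \<le> f q" ps i j] ps3 j(1) by blast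
        then show ?thesis using j q_def by simp
      qed
      then show False using r by simp
    qed
    then show "r \<in> set (take i ps)" proof -
      have "take i ps ! j = ps ! j" using \<open>j < i\<close> by simp
      moreover have "j < length (take i ps)" using \<open>j < i\<close> i by simp
      ultimately show ?thesis using j(2) nth_mem[of j "take i ps"] by simp
    qed
  qed
  have "Lp f (f q) n dvd (\<Prod>r\<in>set (take i ps). r ^ multiplicity r n)"
    unfolding Lp_def by (rule prod_dvd_prod_subset[OF _ sub]) simp
  moreover have "(\<Prod>r\<in>set (take i ps). r ^ multiplicity r n) > 0"
  proof (rule prod_pos)
    fix r assume "r \<in> set (take i ps)"
    then have "r \<in> set ps" by (rule in_set_takeD)
    then have "r \<in> prime_factors n" using ps2 by simp
    then have "prime r" by (rule in_prime_factors_imp_prime)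
    then show "r ^ multiplicity r n > 0" by (simp add: prime_gt_0_nat)
  qed
  ultimately have "S_f f (Lp f (f q) n) \<le> S_f f (\<Prod>r\<in>set (take i ps). r ^ multiplicity r n)"
    by (rule S_mono)
  moreover have "f q \<le> S_f f (Lp f (f q) n) + 1" using bspec[OF H q] .
  ultimately show "f (ps ! i) \<le> S_f f (\<Prod>j<i. (ps ! j) ^ multiplicity (ps ! j) n) + 1"
    unfolding Mi q_def[symmetric] by linarith
qed



theorem theorem3p3:
  fixes f :: "nat \<Rightarrow> nat"
  assumes "multiplicative f"
    and "\<And>p k. prime p \<Longrightarrow> k \<ge> 1 \<Longrightarrow> f (p ^ (k - 1)) \<le> f (p ^ k)"
  shows "convenient f \<longleftrightarrow>
    (\<forall>p m. prime p \<longrightarrow> f_practical f m \<longrightarrow> coprime m p \<longrightarrow> f p \<le> S_f f m + 1 \<longrightarrow>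
       (\<forall>k. f (p ^ (k + 1)) \<le> S_f f (m * p ^ k) + 1))"
proof
  assume conv: "convenient f"
  show "\<forall>p m. prime p \<longrightarrow> f_practical f m \<longrightarrow> coprime m p \<longrightarrow> f p \<le> S_f f m + 1 \<longrightarrow>
       (\<forall>k. f (p ^ (k + 1)) \<le> S_f f (m * p ^ k) + 1)"
  proof (intro allI impI)
    fix p m k :: nat
    assume p: "prime p" and pm: "f_practical f m" and cop: "coprime m p" and fp: "f p \<le> S_f f m + 1"
    have m0: "m > 0" using pm unfolding f_practical_def by simp
    have p0: "p > 0" using prime_gt_0_nat[OF p] .
    define n where "n = m * p ^ Suc k"
    have n0: "n > 0" using m0 p0 n_def by simp
    have mn: "m dvd n" using n_def by simp
    have "weakly_f_practical f n"
    proof (rule weak_from[OF n0], rule ballI)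
      fix q assume q: "q \<in> prime_factors n"
      have qp: "prime q" using q by (rule in_prime_factors_imp_prime)
      have qn: "q dvd n" using q by (simp add: in_prime_factors_iff)
      have fq: "f q \<le> S_f f m + 1"
      proof (cases "q = p")
        case True
        then show ?thesis using fp by simp
      next
        case False
        have "\<not> q dvd p ^ Suc k"
        proof
          assume "q dvd p ^ Suc k"
          then have "q dvd p" using prime_dvd_power[OF qp] by blast
          then show False using primes_dvd_imp_eq[OF qp p] False by blast
        qed
        then have "q dvd m" using qn qp n_def prime_dvd_mult_iff by blast
        then have "f q \<le> S_f f m" unfolding S_f_def
          using finite_divisors_nat[OF m0] by (intro member_le_sum) auto
        then show ?thesis by simp
      qed
      have "f q \<le> S_f f (Lp f (f q) m) + 1" using LA[OF assms pm fq] .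
      also have "S_f f (Lp f (f q) m) \<le> S_f f (Lp f (f q) n)"
        by (rule S_mono[OF Lp_mono[OF mn n0 m0] Lp_pos])
      finally show "f q \<le> S_f f (Lp f (f q) n) + 1" by simp
    qed
    then have "f_practical f n" using conv unfolding convenient_def by blast
    then show "f (p ^ (k + 1)) \<le> S_f f (m * p ^ k) + 1"
      using L2[OF assms _ m0 p cop, of k] n_def by simp
  qed
next
  assume H: "\<forall>p m. prime p \<longrightarrow> f_practical f m \<longrightarrow> coprime m p \<longrightarrow> f p \<le> S_f f m + 1 \<longrightarrow>
       (\<forall>k. f (p ^ (k + 1)) \<le> S_f f (m * p ^ k) + 1)"
  show "convenient f" unfolding convenient_def
  proof (intro allI impI)
    fix n assume wn: "weakly_f_practical f n"
    have n0: "n > 0" using wn unfolding weakly_f_practical_def by simp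
    define ps where "ps = sort_key f (sorted_list_of_set (prime_factors n))"
    have ps1: "distinct ps" unfolding ps_def by simp
    have ps2: "set ps = prime_factors n" unfolding ps_def by simp
    have ps3: "sorted_wrt (\<lambda>p q. f p \<le> f q) ps"
      unfolding ps_def using sorted_sort_key[of f] by (simp add: sorted_map)
    have W: "\<forall>i < length ps. f (ps ! i) \<le> S_f f (\<Prod>j<i. (ps ! j) ^ multiplicity (ps ! j) n) + 1"
      using wn ps1 ps2 ps3 unfolding weakly_f_practical_def by blast
    define M where "M i = (\<Prod>j<i. (ps ! j) ^ multiplicity (ps ! j) n)" for i
    have "i \<le> length ps \<Longrightarrow> f_practical f (M i)" for i
    proof (induction i)
      case 0
      have f1: "f 1 = 1" using assms(1) by (simp add: multiplicative_def)
      have "S_f f 1 = 1" using f1 by (simp add: S_f_def)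
      then show ?case unfolding M_def f_practical_def
        using f1 by (auto intro!: exI[of _ "{1}"])
    next
      case (Suc i)
      then have i: "i < length ps" by simp
      define q where "q = ps ! i"
      have "q \<in> set ps" using i q_def by simp
      then have qpf: "q \<in> prime_factors n" using ps2 by simp
      then have qp: "prime q" by (rule in_prime_factors_imp_prime)
      have pM: "f_practical f (M i)" using Suc by simp
      have cop: "coprime (M i) q" unfolding M_def
      proof (rule prod_coprime_left)
        fix j assume "j \<in> {..<i}"
        then have j: "j < i" by simp
        have "ps ! j \<noteq> q" using ps1 i j q_def nth_eq_iff_index_eq by fastforce
        moreover have "ps ! j \<in> set ps" using i j by simp
        then have "prime (ps ! j)" using ps2 in_prime_factors_imp_prime by blast
        ultimately have "coprime (ps ! j) q" using primes_coprime qp by blast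
        then show "coprime (ps ! j ^ multiplicity (ps ! j) n) q" by simp
      qed
      have "f q \<le> S_f f (M i) + 1" using W i q_def M_def by simp
      then have "\<forall>k. f (q ^ (k + 1)) \<le> S_f f (M i * q ^ k) + 1"
        using H qp pM cop by blast
      then have "f_practical f (M i * q ^ multiplicity q n)"
        using L1iter[OF assms pM qp cop] by blast
      moreover have "M (Suc i) = M i * q ^ multiplicity q n" unfolding M_def q_def by simp
      ultimately show ?case by simp
    qed
    then have "f_practical f (M (length ps))" by simp
    moreover have "M (length ps) = n"
    proof -
      have "M (length ps) = (\<Prod>r\<in>set (take (length ps) ps). r ^ multiplicity r n)"
        unfolding M_def using prod_take[of ps "length ps" "\<lambda>r. r ^ multiplicity r n"] ps1 by simp
      also have "\<dots> = (\<Prod>r\<in>prime_factors n. r ^ multiplicity r n)" using ps2 by simp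
      also have "\<dots> = n" using prod_prime_factors[of n] n0 by simp
      finally show ?thesis .
    qed
    ultimately show "f_practical f n" by simp
  qed
qed

end
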